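(* Fix a trade-off function $f$ and $\alpha\in(0,1)$. Let $D_{n+1}=((X_i,Y_i))_{i=1}^{n+1}$ consist of i.i.d. data points from a distribution $P$ on $\mathcal X\times\mathcal Y$ and let $D_n=((X_i,Y_i))_{i=1}^n$. Let $M$ be any $f$-DP mechanism (with respect to add/remove-one adjacency) and $C(\cdot,\cdot)$ any prediction-set map, sending a mechanism output and a point $x\in\mathcal X$ to a measurable subset of $\mathcal Y$. If $\mathbb P\big(Y_{n+1}\in C(M(D_{n+1}),X_{n+1})\big)\ge 1-\alpha$, then $\mathbb P\big(Y_{n+1}\in C(M(D_n),X_{n+1})\big)\ge f(\alpha)$. Probabilities are over the data and the randomness of $M$ (which is independent of the data).
   Context: Trade-off function: for distributions $P,Q$, $T(P,Q)(\alpha)=\inf_\phi\{1-\mathbb E_Q[\phi]:\mathbb E_P[\phi]\le\alpha\}$ over measurable tests $\phi$ with values in $[0,1]$. A function $f:[0,1]\to[0,1]$ is a trade-off function if it is convex, continuous, non-increasing and $f(\alpha)\le 1-\alpha$. A mechanism $M$ is $f$-DP if $T(M(D),M(D'))\ge f$ pointwise for all datasets $D,D'$ differing by the addition or removal of one entry. *)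

theory Defs
  imports "HOL-Probability.Probability"
begin

definition tradeoff :: "'a measure \<Rightarrow> 'a measure \<Rightarrow> real \<Rightarrow> real" where
  "tradeoff P Q \<alpha> = Inf ((\<lambda>\<phi>. 1 - (\<integral>x. \<phi> x \<partial>Q)) `
      {\<phi> \<in> borel_measurable P. (\<forall>x\<in>space P. 0 \<le> \<phi> x \<and> \<phi> x \<le> 1) \<and> (\<integral>x. \<phi> x \<partial>P) \<le> \<alpha>})"

definition is_tradeoff_fun :: "(real \<Rightarrow> real) \<Rightarrow> bool" where
  "is_tradeoff_fun f \<longleftrightarrow>
     (\<forall>a\<in>{0..1}. 0 \<le> f a \<and> f a \<le> 1) \<and>
     convex_on {0..1} f \<and> continuous_on {0..1} f \<and>
     (\<forall>a\<in>{0..1}. \<forall>b\<in>{0..1}. a \<le> b \<longrightarrow> f b \<le> f a) \<and>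
     (\<forall>a\<in>{0..1}. f a \<le> 1 - a)"

definition remove_one :: "'z list \<Rightarrow> 'z list \<Rightarrow> bool" where
  "remove_one D D' \<longleftrightarrow> (\<exists>i<length D. D' = take i D @ drop (Suc i) D)"

definition adjacent :: "'z list \<Rightarrow> 'z list \<Rightarrow> bool" where
  "adjacent D D' \<longleftrightarrow> remove_one D D' \<or> remove_one D' D"

definition f_DP :: "'z measure \<Rightarrow> (real \<Rightarrow> real) \<Rightarrow> ('z list \<Rightarrow> 'o measure) \<Rightarrow> bool" where
  "f_DP Z f M \<longleftrightarrow>
     (\<forall>D D'. set D \<subseteq> space Z \<longrightarrow> set D' \<subseteq> space Z \<longrightarrow> adjacent D D' \<longrightarrow>
        (\<forall>a\<in>{0..1}. f a \<le> tradeoff (M D) (M D') a))"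

text \<open>Coverage probability P(Y_{n+1} \<in> C(M(D_k), X_{n+1})) where the data
  omega_0,...,omega_n are i.i.d. from P, D_k = (omega_0,...,omega_{k-1}) and the test
  point is omega_n; the mechanism's randomness is independent of the data, so we
  integrate the conditional probability over the data.\<close>
definition coverage ::
  "('x \<times> 'y) measure \<Rightarrow> (('x \<times> 'y) list \<Rightarrow> 'o measure) \<Rightarrow> ('o \<Rightarrow> 'x \<Rightarrow> 'y set) \<Rightarrow> nat \<Rightarrow> nat \<Rightarrow> real" where
  "coverage P M C n k = (\<integral>\<omega>. measure (M (map \<omega> [0..<k]))
       {r \<in> space (M (map \<omega> [0..<k])). snd (\<omega> n) \<in> C r (fst (\<omega> n))}
     \<partial>(PiM {..n} (\<lambda>_. P)))"

end

theory Submission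
  imports Defs
begin

lemma support_line:
  fixes f :: "real \<Rightarrow> real" and a :: real
  assumes cv: "convex_on {0..1} f" and mono: "\<forall>u\<in>{0..1}. \<forall>v\<in>{0..1}. u \<le> v \<longrightarrow> f v \<le> f u"
    and a: "0 < a" "a < 1"
  shows "\<exists>s\<le>0. \<forall>x\<in>{0..1}. f a + s * (x - a) \<le> f x"
proof -
  define L where "L x = (f a - f x) / (a - x)" for x
  define S where "S = L ` {0..<a}"
  have R: "L x \<le> (f y - f a) / (y - a)" if "0 \<le> x" "x < a" "a < y" "y \<le> 1" for x y
  proof -
    have "(f x - f a) / (x - a) \<le> (f a - f y) / (a - y)"
      using convex_on_slope_le[OF cv, of x y a] that by auto
    moreover have "L x = (f x - f a) / (x - a)" "(f y - f a) / (y - a) = (f a - f y) / (a - y)"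
      unfolding L_def by (simp_all add: divide_simps) (simp_all add: algebra_simps)
    ultimately show ?thesis by simp
  qed
  have ne: "S \<noteq> {}" using a unfolding S_def by auto
  have bdd: "bdd_above S" unfolding S_def using R[of _ 1] a
    by (intro bdd_aboveI[where M="(f 1 - f a) / (1 - a)"]) auto
  define s where "s = Sup S"
  have Lle0: "L x \<le> 0" if "0 \<le> x" "x < a" for x
  proof -
    have "f a \<le> f x" using mono that a by auto
    thus ?thesis unfolding L_def using that by (simp add: divide_nonpos_pos)
  qed
  have s0: "s \<le> 0" unfolding s_def using ne Lle0 by (intro cSup_least) (auto simp: S_def)
  have "f a + s * (x - a) \<le> f x" if x: "0 \<le> x" "x \<le> 1" for x
  proof (cases x a rule: linorder_cases)
    case less
    have "L x \<le> s" unfolding s_def using bdd less x by (intro cSup_upper) (auto simp: S_def)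
    hence "(f a - f x) \<le> s * (a - x)" unfolding L_def using less by (simp add: divide_simps)
    thus ?thesis by (simp add: algebra_simps)
  next
    case equal thus ?thesis by simp
  next
    case greater
    have "s \<le> (f x - f a) / (x - a)" unfolding s_def using ne R greater x
      by (intro cSup_least) (auto simp: S_def)
    hence "s * (x - a) \<le> f x - f a" using greater by (simp add: divide_simps)
    thus ?thesis by simp
  qed
  thus ?thesis using s0 by auto
qed

theorem theorem2:
  fixes f :: "real \<Rightarrow> real" and \<alpha> :: real and n :: nat
    and MX :: "'x measure" and MY :: "'y measure" and P :: "('x \<times> 'y) measure"
    and Out :: "'o measure" and M :: "('x \<times> 'y) list \<Rightarrow> 'o measure"
    and C :: "'o \<Rightarrow> 'x \<Rightarrow> 'y set"
  assumes f: "is_tradeoff_fun f"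
    and \<alpha>: "0 < \<alpha>" "\<alpha> < 1"
    and P: "prob_space P" "sets P = sets (MX \<Otimes>\<^sub>M MY)"
    and M_prob: "\<And>D. set D \<subseteq> space P \<Longrightarrow> prob_space (M D) \<and> sets (M D) = sets Out"
    and M_meas: "\<And>k. (\<lambda>\<omega>. M (map \<omega> [0..<k])) \<in> PiM {..<k} (\<lambda>_. P) \<rightarrow>\<^sub>M prob_algebra Out"
    and M_DP: "f_DP P f M"
    and C_sets: "\<And>r x. r \<in> space Out \<Longrightarrow> x \<in> space MX \<Longrightarrow> C r x \<in> sets MY"
    and C_meas: "{(r, z). snd z \<in> C r (fst z)} \<inter> space (Out \<Otimes>\<^sub>M P) \<in> sets (Out \<Otimes>\<^sub>M P)"
    and cov: "coverage P M C n (Suc n) \<ge> 1 - \<alpha>"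
  shows "coverage P M C n n \<ge> f \<alpha>"
proof -
  let ?Pi = "PiM {..n} (\<lambda>_. P)"
  interpret Pi: prob_space ?Pi by (intro prob_space_PiM) (use P in auto)
  define S where "S = {(r, z). snd z \<in> C r (fst z)} \<inter> space (Out \<Otimes>\<^sub>M P)"
  define A where "A \<omega> = {r \<in> space Out. snd (\<omega> n) \<in> C r (fst (\<omega> n))}" for \<omega> :: "nat \<Rightarrow> 'x \<times> 'y"
  define cv where "cv k \<omega> = measure (M (map \<omega> [0..<k])) (A \<omega>)" for k \<omega>
  have D_space: "set (map \<omega> [0..<k]) \<subseteq> space P" if "\<omega> \<in> space ?Pi" "k \<le> Suc n" for \<omega> k
    using that by (auto simp: space_PiM PiE_iff)
  have MD: "prob_space (M (map \<omega> [0..<k]))" "sets (M (map \<omega> [0..<k])) = sets Out"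
    if "\<omega> \<in> space ?Pi" "k \<le> Suc n" for \<omega> k
    using M_prob[OF D_space[OF that]] by auto
  have spM: "space (M (map \<omega> [0..<k])) = space Out" if "\<omega> \<in> space ?Pi" "k \<le> Suc n" for \<omega> k
    using MD(2)[OF that] by (rule sets_eq_imp_space_eq)
  have cov_eq: "coverage P M C n k = integral\<^sup>L ?Pi (cv k)" if "k \<le> Suc n" for k
    unfolding coverage_def
    by (intro Bochner_Integration.integral_cong refl) (simp add: cv_def A_def spM that)
  have Mk: "(\<lambda>\<omega>. M (map \<omega> [0..<k])) \<in> ?Pi \<rightarrow>\<^sub>M prob_algebra Out" if "k \<le> Suc n" for k
  proof -
    have "(\<lambda>\<omega>. M (map (restrict \<omega> {..<k}) [0..<k])) \<in> ?Pi \<rightarrow>\<^sub>M prob_algebra Out"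
      by (rule measurable_compose[OF measurable_restrict_subset M_meas]) (use that in auto)
    moreover have "map (restrict \<omega> {..<k}) [0..<k] = map \<omega> [0..<k]" for \<omega> :: "nat \<Rightarrow> 'x \<times> 'y"
      by (rule map_cong) auto
    ultimately show ?thesis by simp
  qed
  have Sig: "Sigma (space ?Pi) A \<in> sets (?Pi \<Otimes>\<^sub>M Out)"
  proof -
    have m: "(\<lambda>x. (snd x, fst x n)) \<in> ?Pi \<Otimes>\<^sub>M Out \<rightarrow>\<^sub>M Out \<Otimes>\<^sub>M P" by measurable
    have "Sigma (space ?Pi) A = (\<lambda>x. (snd x, fst x n)) -` S \<inter> space (?Pi \<Otimes>\<^sub>M Out)"
      by (auto simp: S_def A_def space_pair_measure space_PiM PiE_iff)
    thus ?thesis using measurable_sets[OF m, of S] C_meas S_def by simp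
  qed
  have cv_meas: "cv k \<in> borel_measurable ?Pi" if "k \<le> Suc n" for k
    unfolding cv_def by (rule measure_measurable_prob_algebra2[OF Sig Mk[OF that]])
  have cv_range: "0 \<le> cv k \<omega> \<and> cv k \<omega> \<le> 1" if "\<omega> \<in> space ?Pi" "k \<le> Suc n" for \<omega> k
    using prob_space.prob_le_1[OF MD(1)[OF that]] unfolding cv_def by auto
  have cv_int: "integrable ?Pi (cv k)" if "k \<le> Suc n" for k
    by (rule Pi.integrable_const_bound[where B=1]) (use cv_range cv_meas that in auto)
  obtain s where s: "s \<le> 0" "\<forall>x\<in>{0..1}. f \<alpha> + s * (x - \<alpha>) \<le> f x"
    using support_line[of f \<alpha>] f \<alpha> unfolding is_tradeoff_fun_def by auto
  have key: "f (1 - cv (Suc n) \<omega>) \<le> cv n \<omega>" if \<omega>: "\<omega> \<in> space ?Pi" for \<omega>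
  proof -
    let ?D = "map \<omega> [0..<Suc n]"
    let ?D' = "map \<omega> [0..<n]"
    have adj: "adjacent ?D ?D'" unfolding adjacent_def remove_one_def
      by (rule disjI1, rule exI[of _ n]) simp
    have x01: "1 - cv (Suc n) \<omega> \<in> {0..1}" using cv_range[OF \<omega>, of "Suc n"] by auto
    have "f (1 - cv (Suc n) \<omega>) \<le> tradeoff (M ?D) (M ?D') (1 - cv (Suc n) \<omega>)"
      using M_DP D_space[OF \<omega>, of "Suc n"] D_space[OF \<omega>, of n] adj x01 unfolding f_DP_def by auto
    also have "\<dots> \<le> cv n \<omega>"
    proof -
      define \<phi> :: "'o \<Rightarrow> real" where "\<phi> r = 1 - indicator (A \<omega>) r" for r
      have Asets: "A \<omega> \<in> sets Out"
      proof -
        have m: "(\<lambda>r. (r, \<omega> n)) \<in> Out \<rightarrow>\<^sub>M Out \<Otimes>\<^sub>M P"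
          using \<omega> by (intro measurable_Pair2') (auto simp: space_PiM PiE_iff)
        have "A \<omega> = (\<lambda>r. (r, \<omega> n)) -` S \<inter> space Out"
          using \<omega> by (auto simp: S_def A_def space_pair_measure space_PiM PiE_iff)
        thus ?thesis using measurable_sets[OF m, of S] C_meas S_def by simp
      qed
      have pD: "prob_space (M ?D)" "sets (M ?D) = sets Out" using MD[OF \<omega>, of "Suc n"] by auto
      have pD': "prob_space (M ?D')" "sets (M ?D') = sets Out" using MD[OF \<omega>, of n] by auto
      have Ain: "A \<omega> \<subseteq> space Out" unfolding A_def by auto
      have i1: "(\<integral>r. \<phi> r \<partial>M ?D) = 1 - cv (Suc n) \<omega>"
      proof -
        interpret p: prob_space "M ?D" by (rule pD)
        have "(\<integral>r. \<phi> r \<partial>M ?D) = (\<integral>r. 1 \<partial>M ?D) - (\<integral>r. indicator (A \<omega>) r \<partial>M ?D)"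
          unfolding \<phi>_def
          by (rule Bochner_Integration.integral_diff) (use Asets pD(2) in \<open>auto intro!: integrable_real_indicator p.integrable_const simp del: upt_Suc simp: sets_eq_imp_space_eq p.emeasure_finite less_top[symmetric]\<close>)
        moreover have "(\<integral>r. 1 \<partial>M ?D) = (1::real)" using p.prob_space by simp
        moreover have "A \<omega> \<inter> space (M ?D) = A \<omega>" using spM[OF \<omega>, of "Suc n"] Ain by blast
        moreover have "(\<integral>r. indicator (A \<omega>) r \<partial>M ?D) = cv (Suc n) \<omega>"
          unfolding cv_def integral_indicator using calculation(3) by (simp del: upt_Suc)
        ultimately show ?thesis by linarith
      qed
      have i2: "(\<integral>r. \<phi> r \<partial>M ?D') = 1 - cv n \<omega>"
      proof -
        interpret p: prob_space "M ?D'" by (rule pD')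
        have "(\<integral>r. \<phi> r \<partial>M ?D') = (\<integral>r. 1 \<partial>M ?D') - (\<integral>r. indicator (A \<omega>) r \<partial>M ?D')"
          unfolding \<phi>_def
          by (rule Bochner_Integration.integral_diff) (use Asets pD'(2) in \<open>auto intro!: integrable_real_indicator p.integrable_const simp del: upt_Suc simp: sets_eq_imp_space_eq p.emeasure_finite less_top[symmetric]\<close>)
        moreover have "(\<integral>r. 1 \<partial>M ?D') = (1::real)" using p.prob_space by simp
        moreover have "A \<omega> \<inter> space (M ?D') = A \<omega>" using spM[OF \<omega>, of n] Ain by (simp add: Int_absorb2)
        moreover have "(\<integral>r. indicator (A \<omega>) r \<partial>M ?D') = cv n \<omega>"
          unfolding cv_def integral_indicator using calculation(3) by (simp del: upt_Suc)
        ultimately show ?thesis by linarith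
      qed
      have \<phi>m: "\<phi> \<in> borel_measurable (M ?D)"
      proof -
        have "\<phi> \<in> borel_measurable Out" unfolding \<phi>_def using Asets by measurable
        thus ?thesis by (subst measurable_cong_sets[OF pD(2) refl])
      qed
      have mem: "\<phi> \<in> {\<phi> \<in> borel_measurable (M ?D). (\<forall>x\<in>space (M ?D). 0 \<le> \<phi> x \<and> \<phi> x \<le> 1) \<and> (\<integral>x. \<phi> x \<partial>M ?D) \<le> 1 - cv (Suc n) \<omega>}"
      proof -
        have "\<forall>x\<in>space (M ?D). 0 \<le> \<phi> x \<and> \<phi> x \<le> 1" by (simp add: \<phi>_def indicator_def)
        thus ?thesis using \<phi>m i1 by (simp del: upt_Suc)
      qed
      have bdd: "bdd_below ((\<lambda>\<phi>. 1 - (\<integral>x. \<phi> x \<partial>M ?D')) ` {\<phi> \<in> borel_measurable (M ?D). (\<forall>x\<in>space (M ?D). 0 \<le> \<phi> x \<and> \<phi> x \<le> 1) \<and> (\<integral>x. \<phi> x \<partial>M ?D) \<le> 1 - cv (Suc n) \<omega>})"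
      proof (rule bdd_belowI[where m=0], clarify)
        fix \<psi> :: "'o \<Rightarrow> real" assume \<psi>: "\<psi> \<in> borel_measurable (M ?D)" "\<forall>x\<in>space (M ?D). 0 \<le> \<psi> x \<and> \<psi> x \<le> 1"
        interpret p: prob_space "M ?D'" by (rule pD')
        have sp: "space (M ?D) = space (M ?D')" using pD(2) pD'(2) by (metis sets_eq_imp_space_eq)
        have m': "\<psi> \<in> borel_measurable (M ?D')"
          using \<psi>(1) by (subst measurable_cong_sets[OF pD'(2) refl], subst (asm) measurable_cong_sets[OF pD(2) refl])
        have int: "integrable (M ?D') \<psi>"
          by (rule p.integrable_const_bound[where B=1]) (use \<psi>(2) sp m' in auto)
        have "(\<integral>x. \<psi> x \<partial>M ?D') \<le> 1"
          by (rule p.integral_le_const[OF int]) (use \<psi>(2) sp in auto)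
        thus "0 \<le> 1 - (\<integral>x. \<psi> x \<partial>M ?D')" by simp
      qed
      have "tradeoff (M ?D) (M ?D') (1 - cv (Suc n) \<omega>) \<le> 1 - (\<integral>x. \<phi> x \<partial>M ?D')"
        unfolding tradeoff_def by (rule cInf_lower[OF imageI[OF mem] bdd])
      thus ?thesis using i2 by simp
    qed
    finally show ?thesis .
  qed
  have lin: "f \<alpha> + s * (1 - cv (Suc n) \<omega> - \<alpha>) \<le> cv n \<omega>" if \<omega>: "\<omega> \<in> space ?Pi" for \<omega>
  proof -
    have "1 - cv (Suc n) \<omega> \<in> {0..1}" using cv_range[OF \<omega>, of "Suc n"] by auto
    hence "f \<alpha> + s * (1 - cv (Suc n) \<omega> - \<alpha>) \<le> f (1 - cv (Suc n) \<omega>)" using s(2) by blast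
    thus ?thesis using key[OF \<omega>] by linarith
  qed
  define c where "c = f \<alpha> + s * (1 - \<alpha>)"
  have fn: "(\<lambda>\<omega>. f \<alpha> + s * (1 - cv (Suc n) \<omega> - \<alpha>)) = (\<lambda>\<omega>. c - s * cv (Suc n) \<omega>)"
    by (rule ext) (simp add: c_def algebra_simps)
  have I1: "integrable ?Pi (\<lambda>\<omega>. c - s * cv (Suc n) \<omega>)"
    by (intro Bochner_Integration.integrable_diff Pi.integrable_const integrable_mult_right cv_int) simp
  have "integral\<^sup>L ?Pi (\<lambda>\<omega>. c - s * cv (Suc n) \<omega>) \<le> integral\<^sup>L ?Pi (cv n)"
  proof (rule integral_mono[OF I1 cv_int])
    fix \<omega> assume "\<omega> \<in> space ?Pi"
    thus "c - s * cv (Suc n) \<omega> \<le> cv n \<omega>" using lin[of \<omega>] by (simp add: c_def algebra_simps)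
  qed simp
  moreover have "integral\<^sup>L ?Pi (\<lambda>\<omega>. c - s * cv (Suc n) \<omega>) = c - s * integral\<^sup>L ?Pi (cv (Suc n))"
  proof -
    have "integral\<^sup>L ?Pi (\<lambda>\<omega>. c - s * cv (Suc n) \<omega>) = integral\<^sup>L ?Pi (\<lambda>\<omega>. c) - integral\<^sup>L ?Pi (\<lambda>\<omega>. s * cv (Suc n) \<omega>)"
      by (rule Bochner_Integration.integral_diff) (intro Pi.integrable_const, intro integrable_mult_right cv_int, simp)
    thus ?thesis using Pi.prob_space by simp
  qed
  moreover have "s * (1 - \<alpha> - integral\<^sup>L ?Pi (cv (Suc n))) \<ge> 0"
    using s(1) cov cov_eq[of "Suc n"] by (intro mult_nonpos_nonpos) auto
  ultimately have "f \<alpha> \<le> integral\<^sup>L ?Pi (cv n)" unfolding c_def by (simp add: algebra_simps)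
  thus ?thesis using cov_eq[of n] by simp
qed

end
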